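(* Let $(M,d)$ be a metric space with at least two points and let $E$ be a Banach space. Then the set of non-injective functions in $\mathrm{Lip}(M,E)$ is pointwise $\dim E$-spaceable in $\mathrm{Lip}(M,E)$: for every non-injective $f\in\mathrm{Lip}(M,E)$ there is a closed linear subspace $X$ of $\mathrm{Lip}(M,E)$ of dimension $\dim E$ such that $f\in X$ and every function in $X$ is non-injective.
   Context: $\mathrm{Lip}(M,E)$ is the Banach space of bounded Lipschitz functions $f\colon M\to E$ with the norm $\|f\|_{\mathrm{Lip}}=\max\{\|f\|_d,\|f\|_\infty\}$, where $\|f\|_d=\sup\{\|f(x)-f(y)\|/d(x,y): x\ne y\}$ and $\|f\|_\infty=\sup_{x\in M}\|f(x)\|$. *)

theory Defs
  imports "HOL-Analysis.Analysis" "HOL-Library.Function_Algebras" "HOL-Library.Equipollence"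
begin

definition fun_scale :: "real \<Rightarrow> ('a \<Rightarrow> 'b::real_vector) \<Rightarrow> ('a \<Rightarrow> 'b)" where
  "fun_scale c f = (\<lambda>x. c *\<^sub>R f x)"

text \<open>Lip(M,E): bounded Lipschitz functions (M is the whole type 'a).\<close>
definition Lip :: "('a::metric_space \<Rightarrow> 'b::real_normed_vector) set" where
  "Lip = {f. bounded (range f) \<and> (\<exists>L. L-lipschitz_on UNIV f)}"

definition lip_const :: "('a::metric_space \<Rightarrow> 'b::real_normed_vector) \<Rightarrow> real" where
  "lip_const f = (SUP p\<in>{(x,y). x \<noteq> y}. dist (f (fst p)) (f (snd p)) / dist (fst p) (snd p))"

definition sup_norm :: "('a \<Rightarrow> 'b::real_normed_vector) \<Rightarrow> real" where
  "sup_norm f = (SUP x. norm (f x))"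

definition lip_norm :: "('a::metric_space \<Rightarrow> 'b::real_normed_vector) \<Rightarrow> real" where
  "lip_norm f = max (lip_const f) (sup_norm f)"

definition lip_closed :: "('a::metric_space \<Rightarrow> 'b::real_normed_vector) set \<Rightarrow> bool" where
  "lip_closed X \<longleftrightarrow> (\<forall>g h. (\<forall>n. g n \<in> X) \<longrightarrow> h \<in> Lip \<longrightarrow>
      (\<lambda>n. lip_norm (\<lambda>x. g n x - h x)) \<longlonglongrightarrow> 0 \<longrightarrow> h \<in> X)"

definition has_dim_of_E :: "('a \<Rightarrow> 'b::real_vector) set \<Rightarrow> bool" where
  "has_dim_of_E X \<longleftrightarrow> (\<exists>B BE::'b set.
      \<not> module.dependent fun_scale B \<and> module.span fun_scale B = X \<and>
      \<not> dependent BE \<and> span BE = UNIV \<and> B \<approx> BE)"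

end

theory Submission
  imports Defs
begin

lemma vs_fun: "vector_space (fun_scale :: real \<Rightarrow> ('a \<Rightarrow> 'b::real_vector) \<Rightarrow> _)"
  by unfold_locales (auto simp: fun_scale_def fun_eq_iff algebra_simps)

lemma mod_fun: "module (fun_scale :: real \<Rightarrow> ('a \<Rightarrow> 'b::real_vector) \<Rightarrow> _)"
  using vs_fun module_iff_vector_space by blast

lemma hom_const: "module_hom (scaleR :: real \<Rightarrow> 'b::real_vector \<Rightarrow> 'b) (fun_scale :: real \<Rightarrow> ('a \<Rightarrow> 'b) \<Rightarrow> _) (\<lambda>e x. e)"
  unfolding module_hom_iff using mod_fun[where 'a='a and 'b='b]
  by (auto simp: fun_scale_def fun_eq_iff real_vector.module_axioms)

lemma span_eq: "span = module.span scaleR" by (simp add: span_raw_def)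
lemma dep_eq: "dependent = module.dependent scaleR" by (simp add: dependent_raw_def)

lemma Lip_const: "(\<lambda>x. c) \<in> Lip"
  unfolding Lip_def by (auto intro: lipschitz_on_constant)

lemma Lip_add: "f \<in> Lip \<Longrightarrow> g \<in> Lip \<Longrightarrow> (\<lambda>x. f x + g x) \<in> Lip"
  unfolding Lip_def
proof safe
  fix L L' assume "bounded (range f)" "bounded (range g)" "L-lipschitz_on UNIV f" "L'-lipschitz_on UNIV g"
  then show "\<exists>L. L-lipschitz_on UNIV (\<lambda>x. f x + g x)" by (blast intro: lipschitz_on_add)
  from \<open>bounded (range f)\<close> \<open>bounded (range g)\<close> obtain A B where "\<forall>x. norm (f x) \<le> A" "\<forall>x. norm (g x) \<le> B"
    unfolding bounded_iff by auto
  then have "\<forall>x. norm (f x + g x) \<le> A + B" by (meson add_mono norm_triangle_le)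
  then show "bounded (range (\<lambda>x. f x + g x))" unfolding bounded_iff by auto
qed

lemma Lip_scale: "f \<in> Lip \<Longrightarrow> (\<lambda>x. t *\<^sub>R f x) \<in> Lip"
  unfolding Lip_def
proof safe
  fix L assume "bounded (range f)" "L-lipschitz_on UNIV f"
  then show "\<exists>L. L-lipschitz_on UNIV (\<lambda>x. t *\<^sub>R f x)" by (blast intro: lipschitz_on_cmult)
  from \<open>bounded (range f)\<close> obtain A where "\<forall>x. norm (f x) \<le> A"
    unfolding bounded_iff by auto
  then have "\<forall>x. norm (t *\<^sub>R f x) \<le> \<bar>t\<bar> * A" by (simp add: mult_left_mono)
  then show "bounded (range (\<lambda>x. t *\<^sub>R f x))" unfolding bounded_iff by auto
qed

lemma Lip_pointwise:
  fixes g :: "nat \<Rightarrow> 'a::metric_space \<Rightarrow> 'b::real_normed_vector"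
  assumes "\<forall>n. g n \<in> Lip" "h \<in> Lip" "(\<lambda>n. lip_norm (\<lambda>x. g n x - h x)) \<longlonglongrightarrow> 0"
  shows "(\<lambda>n. g n x) \<longlonglongrightarrow> h x"
proof -
  have le: "norm (g n x - h x) \<le> lip_norm (\<lambda>x. g n x - h x)" for n
  proof -
    have "(\<lambda>x. g n x + (-1) *\<^sub>R h x) \<in> Lip" using assms by (intro Lip_add Lip_scale) auto
    then have "bounded (range (\<lambda>x. g n x - h x))" by (simp add: Lip_def)
    then obtain B where "\<forall>y. norm (g n y - h y) \<le> B" unfolding bounded_iff by auto
    then have bd: "bdd_above (range (\<lambda>y. norm (g n y - h y)))" by (auto intro: bdd_aboveI2)
    have "norm (g n x - h x) \<le> sup_norm (\<lambda>x. g n x - h x)"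
      unfolding sup_norm_def by (rule cSUP_upper[OF _ bd]) auto
    also have "\<dots> \<le> lip_norm (\<lambda>x. g n x - h x)" unfolding lip_norm_def by simp
    finally show ?thesis .
  qed
  have "(\<lambda>n. g n x - h x) \<longlonglongrightarrow> 0"
    by (rule Lim_null_comparison[OF _ assms(3)]) (use le in auto)
  then show ?thesis by (rule LIM_zero_cancel)
qed


lemma cauchy_coef:
  fixes y :: "nat \<Rightarrow> 'b::metric_space" and t :: "nat \<Rightarrow> real"
  assumes "convergent y" "d > 0" "\<And>m n. \<bar>t m - t n\<bar> * d \<le> dist (y m) (y n)"
  shows "convergent t"
proof -
  have "Cauchy y" using assms(1) convergent_Cauchy by blast
  have "Cauchy t"
    unfolding Cauchy_def
  proof (intro allI impI)
    fix e :: real assume "e > 0"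
    then obtain M where M: "\<forall>m\<ge>M. \<forall>n\<ge>M. dist (y m) (y n) < e * d"
      using \<open>Cauchy y\<close> \<open>d > 0\<close> \<open>e > 0\<close> unfolding Cauchy_def by (meson mult_pos_pos)
    show "\<exists>M. \<forall>m\<ge>M. \<forall>n\<ge>M. dist (t m) (t n) < e"
    proof (intro exI allI impI)
      fix m n assume "m \<ge> M" "n \<ge> M"
      then have "\<bar>t m - t n\<bar> * d < e * d" using M assms(3)[of m n] by (meson order_le_less_trans)
      then show "dist (t m) (t n) < e" using \<open>d > 0\<close> by (simp add: dist_real_def)
    qed
  qed
  then show ?thesis using Cauchy_convergent_iff by blast
qed

lemma closed_span_insert:
  fixes S :: "'b::real_normed_vector set"
  assumes cl: "closed (span S)" and v: "v \<notin> span S"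
  shows "closed (span (insert v S))"
proof -
  define d where "d = infdist v (span S)"
  have "span S \<noteq> {}" using span_zero by blast
  then have "d \<noteq> 0" using in_closed_iff_infdist_zero[OF cl \<open>span S \<noteq> {}\<close>, of v] v unfolding d_def by simp
  then have d: "d > 0" using infdist_nonneg[of v "span S"] unfolding d_def by linarith
  have low: "\<bar>c\<bar> * d \<le> norm (s + c *\<^sub>R v)" if "s \<in> span S" for s c
  proof (cases "c = 0")
    case True then show ?thesis by simp
  next
    case False
    have "(- (1/c)) *\<^sub>R s \<in> span S" using that span_scale by blast
    then have "d \<le> dist v ((- (1/c)) *\<^sub>R s)" unfolding d_def by (rule infdist_le)
    also have "\<dots> = norm (v + (1/c) *\<^sub>R s)" by (simp add: dist_norm)
    finally have "\<bar>c\<bar> * d \<le> \<bar>c\<bar> * norm (v + (1/c) *\<^sub>R s)" by (simp add: mult_left_mono)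
    also have "\<dots> = norm (c *\<^sub>R (v + (1/c) *\<^sub>R s))" by simp
    also have "c *\<^sub>R (v + (1/c) *\<^sub>R s) = s + c *\<^sub>R v" using False by (simp add: algebra_simps)
    finally show ?thesis .
  qed
  show ?thesis
    unfolding closed_sequential_limits
  proof (intro allI impI, elim conjE)
    fix y l assume yin: "\<forall>n. y n \<in> span (insert v S)" and lim: "y \<longlonglongrightarrow> l"
    have "\<forall>n. \<exists>c. y n - c *\<^sub>R v \<in> span S" using yin by (simp add: span_breakdown_eq)
    then obtain c where c: "\<And>n. y n - c n *\<^sub>R v \<in> span S" by metis
    have "convergent c"
    proof (rule cauchy_coef[OF _ d])
      show "convergent y" using lim convergent_def by blast
      fix m n
      have "(y m - c m *\<^sub>R v) - (y n - c n *\<^sub>R v) \<in> span S" using c span_diff by blast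
      from low[OF this, of "c m - c n"]
      show "\<bar>c m - c n\<bar> * d \<le> dist (y m) (y n)" by (simp add: dist_norm algebra_simps)
    qed
    then obtain c0 where c0: "c \<longlonglongrightarrow> c0" using convergent_def by blast
    have "(\<lambda>n. y n - c n *\<^sub>R v) \<longlonglongrightarrow> l - c0 *\<^sub>R v"
      by (intro tendsto_intros lim c0)
    then have "l - c0 *\<^sub>R v \<in> span S" by (rule closed_sequentially[OF cl, rotated]) (use c in auto)
    then show "l \<in> span (insert v S)" unfolding span_breakdown_eq by blast
  qed
qed

lemma closed_span_finite:
  fixes S :: "'b::real_normed_vector set"
  assumes "finite S" shows "closed (span S)"
  using assms
proof (induction S rule: finite_induct)
  case empty then show ?case by simp
next
  case (insert v S)
  then show ?case
    by (metis closed_span_insert span_redundant)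
qed


lemma construct:
  fixes f :: "'a::metric_space \<Rightarrow> 'b::real_normed_vector" and BH :: "'b set"
  assumes fL: "f \<in> Lip" and pq: "f p \<noteq> f q" and cl: "closed (span BH)" and ind: "independent BH"
    and ab: "f a = f b" "a \<noteq> b"
  defines "X \<equiv> {\<lambda>x. t *\<^sub>R f x + e | t e. e \<in> span BH}"
  shows "X \<subseteq> Lip" "module.subspace fun_scale X" "lip_closed X"
    "\<not> module.dependent fun_scale (insert f ((\<lambda>e x. e) ` BH))"
    "module.span fun_scale (insert f ((\<lambda>e x. e) ` BH)) = X" "f \<in> X" "\<forall>g\<in>X. \<not> inj g"
proof -
  interpret H: module_hom "scaleR :: real \<Rightarrow> 'b \<Rightarrow> 'b" "fun_scale :: real \<Rightarrow> ('a \<Rightarrow> 'b) \<Rightarrow> _" "\<lambda>e x. e"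
    by (rule hom_const)
  interpret V: vector_space "fun_scale :: real \<Rightarrow> ('a \<Rightarrow> 'b) \<Rightarrow> _" by (rule vs_fun)

  show "X \<subseteq> Lip" unfolding X_def using fL by (auto intro!: Lip_add Lip_scale Lip_const)
  have sp: "H.m2.span ((\<lambda>e x. e) ` BH) = (\<lambda>e x. e) ` span BH"
    using H.span_image by (simp add: span_eq)
  show spX: "H.m2.span (insert f ((\<lambda>e x. e) ` BH)) = X"
    unfolding H.m2.span_insert sp X_def
  proof (intro set_eqI iffI; clarsimp)
    fix g k e assume "e \<in> span BH" "g - fun_scale k f = (\<lambda>x. e)"
    then have "g = (\<lambda>x. k *\<^sub>R f x + e)" by (auto simp: fun_eq_iff fun_scale_def algebra_simps)
    then show "\<exists>t e. g = (\<lambda>x. t *\<^sub>R f x + e) \<and> e \<in> span BH" using \<open>e \<in> span BH\<close> by blast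
  next
    fix t e assume "e \<in> span BH"
    then show "\<exists>k. (\<lambda>x. t *\<^sub>R f x + e) - fun_scale k f \<in> (\<lambda>e x. e) ` span BH"
      by (intro exI[of _ t]) (auto simp: fun_eq_iff fun_scale_def image_iff)
  qed
  then show "H.m2.subspace X" using H.m2.subspace_span by metis
  have fnc: "f \<notin> range (\<lambda>e x. e)" using pq by auto
  have "\<not> H.m2.dependent ((\<lambda>e x. e) ` BH)"
    by (rule H.independent_injective_image) (use ind in \<open>auto simp: dep_eq inj_on_def fun_eq_iff\<close>)
  then show "\<not> H.m2.dependent (insert f ((\<lambda>e x. e) ` BH))"
    using fnc by (subst V.independent_insert) (auto simp: sp)
  show "f \<in> X" unfolding X_def
    by (rule CollectI, rule exI[of _ 1], rule exI[of _ 0]) (auto simp: span_zero)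
  show "\<forall>g\<in>X. \<not> inj g"
  proof
    fix g assume "g \<in> X"
    then obtain t e where "g = (\<lambda>x. t *\<^sub>R f x + e)" unfolding X_def by blast
    then have "g a = g b" using ab by simp
    then show "\<not> inj g" using ab(2) by (meson injD)
  qed
  show "lip_closed X" unfolding lip_closed_def
  proof (intro allI impI)
    fix g h assume gX: "\<forall>n. g n \<in> X" and hL: "h \<in> Lip" and lim: "(\<lambda>n. lip_norm (\<lambda>x. g n x - h x)) \<longlonglongrightarrow> 0"
    have gL: "\<forall>n. g n \<in> Lip" using gX \<open>X \<subseteq> Lip\<close> by blast
    have pw: "\<And>x. (\<lambda>n. g n x) \<longlonglongrightarrow> h x" using Lip_pointwise[OF gL hL lim] .
    have "\<forall>n. \<exists>t e. g n = (\<lambda>x. t *\<^sub>R f x + e) \<and> e \<in> span BH" 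
    proof
      fix n show "\<exists>t e. g n = (\<lambda>x. t *\<^sub>R f x + e) \<and> e \<in> span BH"
        using gX[rule_format, of n] unfolding X_def by (simp only: mem_Collect_eq)
    qed
    then obtain t e where te: "\<And>n. g n = (\<lambda>x. t n *\<^sub>R f x + e n)" "\<And>n. e n \<in> span BH" by metis
    have "convergent t"
    proof (rule cauchy_coef)
      show "convergent (\<lambda>n. g n p - g n q)" unfolding convergent_def
        by (rule exI, rule tendsto_diff[OF pw pw])
      show "norm (f p - f q) > 0" using pq by simp
      fix m n
      have "dist (g m p - g m q) (g n p - g n q) = norm ((t m - t n) *\<^sub>R (f p - f q))"
        by (simp add: te dist_norm algebra_simps)
      then show "\<bar>t m - t n\<bar> * norm (f p - f q) \<le> dist (g m p - g m q) (g n p - g n q)" by simp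
    qed
    then obtain c where c: "t \<longlonglongrightarrow> c" using convergent_def by blast
    have "(\<lambda>n. g n p - t n *\<^sub>R f p) \<longlonglongrightarrow> h p - c *\<^sub>R f p" by (intro tendsto_intros pw c)
    moreover have "(\<lambda>n. g n p - t n *\<^sub>R f p) = e" by (simp add: te fun_eq_iff)
    ultimately have elim: "e \<longlonglongrightarrow> h p - c *\<^sub>R f p" by simp
    then have e0: "h p - c *\<^sub>R f p \<in> span BH" by (rule closed_sequentially[OF cl, rotated]) (use te in auto)
    have hx: "h x = c *\<^sub>R f x + (h p - c *\<^sub>R f p)" for x
    proof (rule LIMSEQ_unique[OF pw[of x]])
      show "(\<lambda>n. g n x) \<longlonglongrightarrow> c *\<^sub>R f x + (h p - c *\<^sub>R f p)"
        unfolding te by (intro tendsto_intros c elim)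
    qed
    have "h = (\<lambda>x. c *\<^sub>R f x + (h p - c *\<^sub>R f p))" by (rule ext, rule hx)
    then show "h \<in> X" unfolding X_def using e0 by blast
  qed
qed


lemma const_case:
  fixes f :: "'a::metric_space \<Rightarrow> 'b::real_normed_vector" and BE :: "'b set"
  assumes ind: "independent BE" and spE: "span BE = UNIV" and fc: "\<And>x. f x = f a" and ab: "a \<noteq> b"
  shows "\<exists>X. X \<subseteq> Lip \<and> module.subspace fun_scale X \<and> lip_closed X \<and> has_dim_of_E X
             \<and> f \<in> X \<and> (\<forall>g\<in>X. \<not> inj g)"
proof -
  interpret H: module_hom "scaleR :: real \<Rightarrow> 'b \<Rightarrow> 'b" "fun_scale :: real \<Rightarrow> ('a \<Rightarrow> 'b) \<Rightarrow> _" "\<lambda>e x. e"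
    by (rule hom_const)
  define X where "X = range (\<lambda>(e::'b) (x::'a). e)"
  have sp: "H.m2.span ((\<lambda>e x. e) ` BE) = X"
    using H.span_image spE by (simp add: span_eq X_def)
  have injc: "inj (\<lambda>e (x::'a). e)" by (auto simp: inj_def fun_eq_iff)
  have "\<not> H.m2.dependent ((\<lambda>e x. e) ` BE)"
    by (rule H.independent_injective_image) (use ind injc in \<open>auto simp: dep_eq inj_on_def\<close>)
  moreover have "(\<lambda>e (x::'a). e) ` BE \<approx> BE" by (rule inj_on_image_eqpoll_self) (use injc in \<open>auto simp: inj_on_def\<close>)
  ultimately have "has_dim_of_E X" unfolding has_dim_of_E_def using sp ind spE by blast
  moreover have "H.m2.subspace X" using sp H.m2.subspace_span by metis
  moreover have "X \<subseteq> Lip" unfolding X_def using Lip_const by blast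
  moreover have "f = (\<lambda>x. f a)" by (rule ext, rule fc)
  then have "f \<in> X" unfolding X_def by blast
  moreover have "\<forall>g\<in>X. \<not> inj g" unfolding X_def using ab by (auto simp: inj_def)
  moreover have "lip_closed X" unfolding lip_closed_def
  proof (intro allI impI)
    fix g h assume gX: "\<forall>n. g n \<in> X" and hL: "h \<in> Lip" and lim: "(\<lambda>n. lip_norm (\<lambda>x. g n x - h x)) \<longlonglongrightarrow> 0"
    have gL: "\<forall>n. g n \<in> Lip" using gX \<open>X \<subseteq> Lip\<close> by blast
    have pw: "\<And>x. (\<lambda>n. g n x) \<longlonglongrightarrow> h x" using Lip_pointwise[OF gL hL lim] .
    have hx: "h x = h a" for x
    proof (rule LIMSEQ_unique[OF pw[of x]])
      have "g n x = g n a" for n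
      proof -
        obtain e where "g n = (\<lambda>x. e)" using gX unfolding X_def by blast
        then show ?thesis by simp
      qed
      then have "(\<lambda>n. g n x) = (\<lambda>n. g n a)" by simp
      then show "(\<lambda>n. g n x) \<longlonglongrightarrow> h a" using pw[of a] by simp
    qed
    have "h = (\<lambda>x. h a)" by (rule ext, rule hx)
    then show "h \<in> X" unfolding X_def by blast
  qed
  ultimately show ?thesis by blast
qed

theorem proposition4p7:
  fixes f :: "'a::metric_space \<Rightarrow> 'b::banach"
  assumes "\<exists>x y::'a. x \<noteq> y"
    and "f \<in> Lip"
    and "\<not> inj f"
  shows "\<exists>X. X \<subseteq> Lip \<and> module.subspace fun_scale X \<and> lip_closed X \<and> has_dim_of_E X
             \<and> f \<in> X \<and> (\<forall>g\<in>X. \<not> inj g)"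
proof -
  obtain a b where ab: "a \<noteq> b" "f a = f b" using assms(3) unfolding inj_def by blast
  obtain BE :: "'b set" where BE: "independent BE" "UNIV \<subseteq> span BE"
    using basis_exists[of UNIV] by blast
  then have spE: "span BE = UNIV" by blast
  show ?thesis
  proof (cases "\<forall>x. f x = f a")
    case True
    then show ?thesis using const_case[OF BE(1) spE _ ab(1)] by blast
  next
    case False
    then obtain p where pq: "f p \<noteq> f a" by blast
    have injc: "inj (\<lambda>e (x::'a). e)" by (auto simp: inj_def fun_eq_iff)
    have fnc: "f \<notin> range (\<lambda>e (x::'a). e)" using pq by (auto simp: fun_eq_iff)
    show ?thesis
    proof (cases "finite BE")
      case False
      have clE: "closed (span BE)" using spE by simp
      note C = construct[OF assms(2) pq clE BE(1) ab(2,1)]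
      have "(\<lambda>e (x::'a). e) ` BE \<approx> BE" by (rule inj_on_image_eqpoll_self) (use injc in \<open>auto simp: inj_on_def\<close>)
      moreover have "infinite ((\<lambda>e (x::'a). e) ` BE)"
      proof
        assume "finite ((\<lambda>e (x::'a). e) ` BE)"
        then have "finite BE" by (rule finite_imageD) (rule inj_on_subset[OF injc subset_UNIV])
        with False show False ..
      qed
      then have "insert f ((\<lambda>e (x::'a). e) ` BE) \<approx> ((\<lambda>e (x::'a). e) ` BE)"
        by (rule infinite_insert_eqpoll)
      ultimately have "insert f ((\<lambda>e (x::'a). e) ` BE) \<approx> BE"
        using eqpoll_trans by blast
      then have "has_dim_of_E {\<lambda>x. t *\<^sub>R f x + e | t e. e \<in> span BE}"
        unfolding has_dim_of_E_def using C(4,5) BE(1) spE by blast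
      then show ?thesis apply (rule_tac exI[of _ "{\<lambda>x. t *\<^sub>R f x + e | t e. e \<in> span BE}"])
        using C(1,2,3,6,7) by blast
    next
      case True
      have "BE \<noteq> {}"
      proof
        assume "BE = {}"
        then have U: "UNIV = {0::'b}" using spE by simp
        have "f p \<in> {0}" "f a \<in> {0}" by (simp_all only: U[symmetric] UNIV_I)
        then show False using pq by simp
      qed
      then obtain v where v: "v \<in> BE" by blast
      define BH where "BH = BE - {v}"
      have indH: "independent BH" unfolding BH_def using BE(1) by (rule independent_mono) auto
      have clH: "closed (span BH)" unfolding BH_def using True by (intro closed_span_finite) auto
      note C = construct[OF assms(2) pq clH indH ab(2,1)]
      have "finite BH" using True BH_def by auto
      have "card ((\<lambda>e (x::'a). e) ` BH) = card BH"
        by (rule card_image) (use injc in \<open>auto simp: inj_on_def\<close>)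
      moreover have "f \<notin> (\<lambda>e (x::'a). e) ` BH" using fnc by blast
      ultimately have "card (insert f ((\<lambda>e (x::'a). e) ` BH)) = Suc (card BH)"
        using \<open>finite BH\<close> by simp
      also have "\<dots> = card BE" unfolding BH_def using True v
        by (metis card_Suc_Diff1)
      finally have "insert f ((\<lambda>e (x::'a). e) ` BH) \<approx> BE"
        using \<open>finite BH\<close> True by (subst eqpoll_iff_card) auto
      then have "has_dim_of_E {\<lambda>x. t *\<^sub>R f x + e | t e. e \<in> span BH}"
        unfolding has_dim_of_E_def using C(4,5) BE(1) spE by blast
      then show ?thesis apply (rule_tac exI[of _ "{\<lambda>x. t *\<^sub>R f x + e | t e. e \<in> span BH}"])
        using C(1,2,3,6,7) by blast
    qed
  qed
qed

end
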